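(* Let $\mathbb{A}$ be a CPO with set of maximal elements $A$, and $\mathbb{B}$ a sized CPO with set of maximal elements $B$ and size function $s$. Let $h:\mathbb{A}\times\mathbb{B}^m\to\mathbb{B}$ and $g_i:\mathbb{A}\to\mathbb{A}$ ($i=1,\ldots,m$) be regular. Suppose that $s(h(x,y_1,\ldots,y_m))>\min_{i=1,\ldots,m}s(y_i)$ for all $x\in A$ and all $y_1,\ldots,y_m\in\mathbb{B}$ such that some $y_k$ is non-maximal. Then the endofunction $F^*:\mathbb{B}^{\mathbb{A}}\to\mathbb{B}^{\mathbb{A}}$ defined by $F^*(f)(x)=h(x,f(g_1(x)),\ldots,f(g_m(x)))$ has a least fixpoint $f^*$. Moreover, $f^*$ is regular, and its restriction $f^*|_A$ belongs to $B^A$ and is the unique function $u\in B^A$ satisfying $u(x)=h(x,u(g_1(x)),\ldots,u(g_m(x)))$ for all $x\in A$.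
   Context: A CPO is a partial order with a least element in which every directed set has a supremum; a function between CPOs is continuous if it maps directed sets to directed sets and preserves their suprema; products and function spaces $\mathbb{B}^{X}$ are ordered componentwise/pointwise. For an ordinal $\zeta$, $\mathrm{On}(\zeta)$ is the set of ordinals $\le\zeta$. A sized CPO is a tuple $\langle\mathbb{B},\zeta,s,\mathtt{cut}\rangle$ where $\mathbb{B}$ is a CPO, $\zeta$ an ordinal, $s:\mathbb{B}\to\mathrm{On}(\zeta)$ and $\mathtt{cut}:\mathrm{On}(\zeta)\times\mathbb{B}\to\mathbb{B}$, such that: $s$ is surjective and continuous; $s(x)=\zeta$ iff $x$ is maximal; $\mathtt{cut}$ is monotone in both arguments; $s(\mathtt{cut}(\alpha,x))=\alpha$ if $s(x)>\alpha$; $\mathtt{cut}(\alpha,x)=x$ if $s(x)\le\alpha$. A function between CPOs is regular if it is monotone and maps maximal elements to maximal elements; a function $h:S\times\mathbb{A}'\to\mathbb{B}'$ with $S$ a set is regular if $y\mapsto h(x,y)$ is regular for each $x\in S$. *)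

theory Defs
  imports Main
begin

definition po_on :: "'a set \<Rightarrow> ('a \<Rightarrow> 'a \<Rightarrow> bool) \<Rightarrow> bool" where
  "po_on C le \<longleftrightarrow> (\<forall>x\<in>C. le x x) \<and>
     (\<forall>x\<in>C. \<forall>y\<in>C. le x y \<and> le y x \<longrightarrow> x = y) \<and>
     (\<forall>x\<in>C. \<forall>y\<in>C. \<forall>z\<in>C. le x y \<and> le y z \<longrightarrow> le x z)"

definition directed_on :: "'a set \<Rightarrow> ('a \<Rightarrow> 'a \<Rightarrow> bool) \<Rightarrow> 'a set \<Rightarrow> bool" where
  "directed_on C le D \<longleftrightarrow> D \<subseteq> C \<and> D \<noteq> {} \<and>
     (\<forall>x\<in>D. \<forall>y\<in>D. \<exists>z\<in>D. le x z \<and> le y z)"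

definition is_sup_on :: "'a set \<Rightarrow> ('a \<Rightarrow> 'a \<Rightarrow> bool) \<Rightarrow> 'a set \<Rightarrow> 'a \<Rightarrow> bool" where
  "is_sup_on C le D s \<longleftrightarrow> s \<in> C \<and> (\<forall>x\<in>D. le x s) \<and>
     (\<forall>u\<in>C. (\<forall>x\<in>D. le x u) \<longrightarrow> le s u)"

definition cpo_on :: "'a set \<Rightarrow> ('a \<Rightarrow> 'a \<Rightarrow> bool) \<Rightarrow> bool" where
  "cpo_on C le \<longleftrightarrow> po_on C le \<and> (\<exists>b\<in>C. \<forall>x\<in>C. le b x) \<and>
     (\<forall>D. directed_on C le D \<longrightarrow> (\<exists>s. is_sup_on C le D s))"

definition continuous_betw ::
  "'a set \<Rightarrow> ('a \<Rightarrow> 'a \<Rightarrow> bool) \<Rightarrow> 'b set \<Rightarrow> ('b \<Rightarrow> 'b \<Rightarrow> bool) \<Rightarrow> ('a \<Rightarrow> 'b) \<Rightarrow> bool" where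
  "continuous_betw C le C' le' f \<longleftrightarrow> f ` C \<subseteq> C' \<and>
     (\<forall>D. directed_on C le D \<longrightarrow> directed_on C' le' (f ` D) \<and>
        (\<forall>s. is_sup_on C le D s \<longrightarrow> is_sup_on C' le' (f ` D) (f s)))"

definition maximal_on :: "'a set \<Rightarrow> ('a \<Rightarrow> 'a \<Rightarrow> bool) \<Rightarrow> 'a \<Rightarrow> bool" where
  "maximal_on C le x \<longleftrightarrow> x \<in> C \<and> (\<forall>y\<in>C. le x y \<longrightarrow> y = x)"

definition regular_on ::
  "'a set \<Rightarrow> ('a \<Rightarrow> 'a \<Rightarrow> bool) \<Rightarrow> 'b set \<Rightarrow> ('b \<Rightarrow> 'b \<Rightarrow> bool) \<Rightarrow> ('a \<Rightarrow> 'b) \<Rightarrow> bool" where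
  "regular_on C le C' le' f \<longleftrightarrow> f ` C \<subseteq> C' \<and>
     (\<forall>x\<in>C. \<forall>y\<in>C. le x y \<longrightarrow> le' (f x) (f y)) \<and>
     (\<forall>x. maximal_on C le x \<longrightarrow> maximal_on C' le' (f x))"

text \<open>Sized CPO on the whole type 'b; the ordinals On(zeta) are represented by the
  initial segment {..zeta} of a well-ordered type 'o.\<close>
definition sized_cpo ::
  "('b \<Rightarrow> 'b \<Rightarrow> bool) \<Rightarrow> 'o::wellorder \<Rightarrow> ('b \<Rightarrow> 'o) \<Rightarrow> ('o \<Rightarrow> 'b \<Rightarrow> 'b) \<Rightarrow> bool" where
  "sized_cpo le \<zeta> s ct \<longleftrightarrow> cpo_on UNIV le \<and>
     s ` UNIV = {..\<zeta>} \<and>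
     continuous_betw UNIV le {..\<zeta>} (\<le>) s \<and>
     (\<forall>x. s x = \<zeta> \<longleftrightarrow> maximal_on UNIV le x) \<and>
     (\<forall>\<alpha> \<beta> x y. \<alpha> \<le> \<zeta> \<longrightarrow> \<beta> \<le> \<zeta> \<longrightarrow> \<alpha> \<le> \<beta> \<longrightarrow> le x y \<longrightarrow> le (ct \<alpha> x) (ct \<beta> y)) \<and>
     (\<forall>\<alpha> x. \<alpha> \<le> \<zeta> \<longrightarrow> \<alpha> < s x \<longrightarrow> s (ct \<alpha> x) = \<alpha>) \<and>
     (\<forall>\<alpha> x. \<alpha> \<le> \<zeta> \<longrightarrow> s x \<le> \<alpha> \<longrightarrow> ct \<alpha> x = x)"

text \<open>Product order on A x B^m, with B^m represented as lists of length m.\<close>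
definition prod_list_carrier :: "nat \<Rightarrow> ('a \<times> 'b list) set" where
  "prod_list_carrier m = {(x, ys). length ys = m}"

definition prod_list_le ::
  "('a \<Rightarrow> 'a \<Rightarrow> bool) \<Rightarrow> ('b \<Rightarrow> 'b \<Rightarrow> bool) \<Rightarrow> 'a \<times> 'b list \<Rightarrow> 'a \<times> 'b list \<Rightarrow> bool" where
  "prod_list_le leA leB p q \<longleftrightarrow> leA (fst p) (fst q) \<and> list_all2 leB (snd p) (snd q)"

definition fun_le :: "('b \<Rightarrow> 'b \<Rightarrow> bool) \<Rightarrow> ('a \<Rightarrow> 'b) \<Rightarrow> ('a \<Rightarrow> 'b) \<Rightarrow> bool" where
  "fun_le le f g \<longleftrightarrow> (\<forall>x. le (f x) (g x))"

end

theory Submission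
  imports Defs
begin

lemma pfd_of_cpo:
  assumes "cpo_on UNIV le"
  shows "partial_function_definitions le
     (\<lambda>C. if C = {} then (SOME b. \<forall>x. le b x) else (SOME t. is_sup_on UNIV le C t))"
proof -
  have po: "po_on UNIV le" and bot: "\<exists>b. \<forall>x. le b x"
    and dir: "\<And>D. directed_on UNIV le D \<Longrightarrow> \<exists>s. is_sup_on UNIV le D s"
    using assms unfolding cpo_on_def by auto
  have refl: "\<And>x. le x x" using po unfolding po_on_def by auto
  have supex: "\<exists>t. is_sup_on UNIV le A t" if "Complete_Partial_Order.chain le A" "A \<noteq> {}" for A
  proof (rule dir)
    show "directed_on UNIV le A" unfolding directed_on_def
      using that refl by (auto dest: chainD)
  qed
  show ?thesis
  proof
    fix x show "le x x" by (rule refl)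
  next
    fix x y z assume "le x y" "le y z" thus "le x z" using po unfolding po_on_def by blast
  next
    fix x y assume "le x y" "le y x" thus "x = y" using po unfolding po_on_def by blast
  next
    fix A x assume c: "Complete_Partial_Order.chain le A" and x: "x \<in> A"
    then have "A \<noteq> {}" by auto
    from someI_ex[OF supex[OF c this]] x this
    show "le x ((if A = {} then (SOME b. \<forall>x. le b x) else (SOME t. is_sup_on UNIV le A t)))"
      unfolding is_sup_on_def by auto
  next
    fix A z assume c: "Complete_Partial_Order.chain le A" and u: "\<And>x. x \<in> A \<Longrightarrow> le x z"
    show "le ((if A = {} then (SOME b. \<forall>x. le b x) else (SOME t. is_sup_on UNIV le A t))) z"
    proof (cases "A = {}")
      case True then show ?thesis using someI_ex[OF bot] by auto
    next
      case False
      from someI_ex[OF supex[OF c False]] u False show ?thesis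
        unfolding is_sup_on_def by auto
    qed
  qed
qed

theorem lemma4p4:
  fixes leA :: "'a \<Rightarrow> 'a \<Rightarrow> bool"
    and leB :: "'b \<Rightarrow> 'b \<Rightarrow> bool"
    and \<zeta> :: "'o::wellorder"
    and s :: "'b \<Rightarrow> 'o"
    and ct :: "'o \<Rightarrow> 'b \<Rightarrow> 'b"
    and m :: nat
    and h :: "'a \<times> 'b list \<Rightarrow> 'b"
    and g :: "nat \<Rightarrow> 'a \<Rightarrow> 'a"
  assumes cpoA: "cpo_on UNIV leA"
    and sizedB: "sized_cpo leB \<zeta> s ct"
    and h_reg: "regular_on (prod_list_carrier m) (prod_list_le leA leB) UNIV leB h"
    and g_reg: "\<And>i. i < m \<Longrightarrow> regular_on UNIV leA UNIV leA (g i)"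
    and h_size: "\<And>x ys. maximal_on UNIV leA x \<Longrightarrow> length ys = m \<Longrightarrow>
        (\<exists>k<m. \<not> maximal_on UNIV leB (ys ! k)) \<Longrightarrow>
        s (h (x, ys)) > Min (s ` set ys)"
  shows "\<exists>fs :: 'a \<Rightarrow> 'b.
     (let F = (\<lambda>f x. h (x, map (\<lambda>i. f (g i x)) [0..<m])) in
       F fs = fs \<and> (\<forall>f. F f = f \<longrightarrow> fun_le leB fs f)) \<and>
     regular_on UNIV leA UNIV leB fs \<and>
     (\<forall>x. maximal_on UNIV leA x \<longrightarrow> maximal_on UNIV leB (fs x)) \<and>
     (\<forall>u :: 'a \<Rightarrow> 'b.
        (\<forall>x. maximal_on UNIV leA x \<longrightarrow> maximal_on UNIV leB (u x)) \<and>
        (\<forall>x. maximal_on UNIV leA x \<longrightarrow> u x = h (x, map (\<lambda>i. u (g i x)) [0..<m]))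
        \<longrightarrow> (\<forall>x. maximal_on UNIV leA x \<longrightarrow> u x = fs x))"
proof -
  have cpoB: "cpo_on UNIV leB" and sz_img: "s ` UNIV = {..\<zeta>}"
    and sz_max: "\<And>x. s x = \<zeta> \<longleftrightarrow> maximal_on UNIV leB x"
    using sizedB unfolding sized_cpo_def by auto
  define Lb where "Lb = (\<lambda>C. if C = {} then (SOME b. \<forall>x. leB b x) else (SOME t. is_sup_on UNIV leB C t))"
  have pB: "partial_function_definitions leB Lb" unfolding Lb_def by (rule pfd_of_cpo[OF cpoB])
  have pF: "partial_function_definitions (fun_ord leB) (fun_lub Lb)"
    by (rule partial_function_lift[OF pB])
  have cc: "class.ccpo (fun_lub Lb) (fun_ord leB) (mk_less (fun_ord leB))"
    by (rule ccpo[OF pF])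
  have reflA: "\<And>x. leA x x" using cpoA unfolding cpo_on_def po_on_def by auto
  have reflB: "\<And>x. leB x x" using pB partial_function_definitions.leq_refl by metis
  have transB: "\<And>x y z. leB x y \<Longrightarrow> leB y z \<Longrightarrow> leB x z"
    using pB partial_function_definitions.leq_trans by metis
  have h_mono: "\<And>x x' ys ys'. leA x x' \<Longrightarrow> length ys = m \<Longrightarrow> length ys' = m \<Longrightarrow>
       (\<And>k. k < m \<Longrightarrow> leB (ys ! k) (ys' ! k)) \<Longrightarrow> leB (h (x, ys)) (h (x', ys'))"
    using h_reg unfolding regular_on_def prod_list_carrier_def prod_list_le_def
    by (auto simp: list_all2_conv_all_nth)
  have h_max: "\<And>x ys. maximal_on UNIV leA x \<Longrightarrow> length ys = m \<Longrightarrow>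
       (\<And>k. k < m \<Longrightarrow> maximal_on UNIV leB (ys ! k)) \<Longrightarrow> maximal_on UNIV leB (h (x, ys))"
  proof -
    fix x ys assume mx: "maximal_on UNIV leA x" and l: "length ys = m"
      and my: "\<And>k. k < m \<Longrightarrow> maximal_on UNIV leB (ys ! k)"
    have "maximal_on (prod_list_carrier m) (prod_list_le leA leB) (x, ys)"
      unfolding maximal_on_def
    proof (intro conjI ballI impI)
      show "(x, ys) \<in> prod_list_carrier m" using l by (simp add: prod_list_carrier_def)
      fix p assume p: "p \<in> prod_list_carrier m" and le: "prod_list_le leA leB (x, ys) p"
      obtain x' ys' where pp: "p = (x', ys')" by (cases p)
      have "x' = x" using mx le pp unfolding maximal_on_def prod_list_le_def by auto
      moreover have "ys' = ys"
      proof (rule nth_equalityI)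
        show "length ys' = length ys" using p pp l by (simp add: prod_list_carrier_def)
        fix k assume "k < length ys'"
        then have "k < m" using p pp by (simp add: prod_list_carrier_def)
        moreover have "leB (ys ! k) (ys' ! k)" using le pp \<open>k < m\<close> l
          by (auto simp: prod_list_le_def list_all2_conv_all_nth)
        ultimately show "ys' ! k = ys ! k" using my unfolding maximal_on_def by auto
      qed
      ultimately show "p = (x, ys)" using pp by simp
    qed
    then show "maximal_on UNIV leB (h (x, ys))" using h_reg unfolding regular_on_def by blast
  qed
  have g_mono: "\<And>i x y. i < m \<Longrightarrow> leA x y \<Longrightarrow> leA (g i x) (g i y)"
    using g_reg unfolding regular_on_def by blast
  have g_max: "\<And>i x. i < m \<Longrightarrow> maximal_on UNIV leA x \<Longrightarrow> maximal_on UNIV leA (g i x)"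
    using g_reg unfolding regular_on_def by blast
  define F where "F = (\<lambda>(f::'a \<Rightarrow> 'b) x. h (x, map (\<lambda>i. f (g i x)) [0..<m]))"
  have Fmono: "monotone (fun_ord leB) (fun_ord leB) F"
    by (rule monotoneI) (auto simp: F_def fun_ord_def intro!: h_mono reflA)
  define fs where "fs = ccpo.fixp (fun_lub Lb) (fun_ord leB) F"
  have fixeq: "F fs = fs" unfolding fs_def using ccpo.fixp_unfold[OF cc Fmono] by simp
  have least: "\<And>f. F f = f \<Longrightarrow> fun_le leB fs f"
  proof -
    fix f assume "F f = f"
    then have "fun_ord leB (F f) f" by (simp add: fun_ord_def reflB)
    then show "fun_le leB fs f" unfolding fs_def
      using ccpo.fixp_lowerbound[OF cc Fmono] by (simp add: fun_le_def fun_ord_def)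
  qed
  have fsmono: "\<forall>x y. leA x y \<longrightarrow> leB (fs x) (fs y)"
    unfolding fs_def
  proof (rule ccpo.fixp_induct[OF cc _ Fmono])
    show "ccpo.admissible (fun_lub Lb) (fun_ord leB) (\<lambda>f. \<forall>x y. leA x y \<longrightarrow> leB (f x) (f y))"
    proof (rule ccpo.admissibleI, intro allI impI)
      fix A x y assume c: "Complete_Partial_Order.chain (fun_ord leB) A" and ne: "A \<noteq> {}"
        and all: "\<forall>f\<in>A. \<forall>x y. leA x y \<longrightarrow> leB (f x) (f y)" and xy: "leA x y"
      have cx: "Complete_Partial_Order.chain leB {z. \<exists>f\<in>A. z = f x}" by (rule chain_fun[OF c])
      have cy: "Complete_Partial_Order.chain leB {z. \<exists>f\<in>A. z = f y}" by (rule chain_fun[OF c])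
      show "leB (fun_lub Lb A x) (fun_lub Lb A y)" unfolding fun_lub_def
      proof (rule partial_function_definitions.lub_least[OF pB cx])
        fix z assume "z \<in> {z. \<exists>f\<in>A. z = f x}"
        then obtain f where f: "f \<in> A" "z = f x" by blast
        have "leB (f x) (f y)" using all f xy by blast
        moreover have "leB (f y) (Lb {z. \<exists>f\<in>A. z = f y})"
          by (rule partial_function_definitions.lub_upper[OF pB cy]) (use f in blast)
        ultimately show "leB z (Lb {z. \<exists>f\<in>A. z = f y})" using f transB by blast
      qed
    qed
  next
    show "\<forall>x y. leA x y \<longrightarrow> leB (fun_lub Lb {} x) (fun_lub Lb {} y)"
      by (simp add: fun_lub_def reflB)
  next
    fix f assume "\<forall>x y. leA x y \<longrightarrow> leB (f x) (f y)"
    then have fm: "\<And>x y. leA x y \<Longrightarrow> leB (f x) (f y)" by blast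
    show "\<forall>x y. leA x y \<longrightarrow> leB (F f x) (F f y)"
    proof (intro allI impI)
      fix x y assume xy: "leA x y"
      show "leB (F f x) (F f y)" unfolding F_def
        by (rule h_mono[OF xy]) (auto intro!: fm g_mono xy)
    qed
  qed
  have fseq: "\<And>x. fs x = h (x, map (\<lambda>i. fs (g i x)) [0..<m])"
  proof -
    fix x have "F fs x = fs x" using fixeq by simp
    then show "fs x = h (x, map (\<lambda>i. fs (g i x)) [0..<m])" by (simp add: F_def)
  qed
  have sle: "\<And>y. s y \<le> \<zeta>" using sz_img by auto
  have fsmax: "\<forall>x. maximal_on UNIV leA x \<longrightarrow> maximal_on UNIV leB (fs x)"
  proof (rule ccontr)
    assume "\<not> ?thesis"
    then obtain x' where x': "maximal_on UNIV leA x'" "\<not> maximal_on UNIV leB (fs x')" by blast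
    define a0 where "a0 = (LEAST a. \<exists>x. maximal_on UNIV leA x \<and> s (fs x) = a)"
    have ex: "\<exists>x. maximal_on UNIV leA x \<and> s (fs x) = a0"
      unfolding a0_def by (rule LeastI_ex) (use x' in blast)
    then obtain x where x: "maximal_on UNIV leA x" "s (fs x) = a0" by blast
    have lb: "\<And>y. maximal_on UNIV leA y \<Longrightarrow> a0 \<le> s (fs y)"
      unfolding a0_def by (rule Least_le) blast
    have "s (fs x') < \<zeta>" using x' sz_max sle[of "fs x'"] by (auto simp: less_le)
    then have "a0 < \<zeta>" using lb[OF x'(1)] by simp
    then have nmx: "\<not> maximal_on UNIV leB (fs x)" using x sz_max[of "fs x"] by auto
    define ys where "ys = map (\<lambda>i. fs (g i x)) [0..<m]"
    have fx: "fs x = h (x, ys)" unfolding ys_def by (rule fseq)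
    have ly: "length ys = m" by (simp add: ys_def)
    have "\<exists>k<m. \<not> maximal_on UNIV leB (ys ! k)"
    proof (rule ccontr)
      assume "\<not> ?thesis"
      then have "maximal_on UNIV leB (h (x, ys))" using h_max[OF x(1) ly] by blast
      then show False using nmx fx by simp
    qed
    then have lt: "s (h (x, ys)) > Min (s ` set ys)" using h_size[OF x(1) ly] by blast
    then obtain k where k: "k < m" by (meson \<open>\<exists>k<m. _\<close>)
    have "set ys \<noteq> {}" using k ly by auto
    then have "Min (s ` set ys) \<in> s ` set ys" by (intro Min_in) auto
    then obtain i where i: "i < m" "Min (s ` set ys) = s (fs (g i x))"
      by (auto simp: ys_def)
    have "a0 \<le> s (fs (g i x))" using lb g_max[OF i(1) x(1)] by blast
    then show False using lt i fx x by simp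
  qed
  have uniq: "\<forall>u :: 'a \<Rightarrow> 'b.
        (\<forall>x. maximal_on UNIV leA x \<longrightarrow> maximal_on UNIV leB (u x)) \<and>
        (\<forall>x. maximal_on UNIV leA x \<longrightarrow> u x = h (x, map (\<lambda>i. u (g i x)) [0..<m]))
        \<longrightarrow> (\<forall>x. maximal_on UNIV leA x \<longrightarrow> u x = fs x)"
  proof (intro allI impI)
    fix u x assume hu: "(\<forall>x. maximal_on UNIV leA x \<longrightarrow> maximal_on UNIV leB (u x)) \<and>
        (\<forall>x. maximal_on UNIV leA x \<longrightarrow> u x = h (x, map (\<lambda>i. u (g i x)) [0..<m]))"
      and mx: "maximal_on UNIV leA x"
    have P: "\<forall>x. maximal_on UNIV leA x \<longrightarrow> leB (fs x) (u x)"
      unfolding fs_def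
    proof (rule ccpo.fixp_induct[OF cc _ Fmono])
      show "ccpo.admissible (fun_lub Lb) (fun_ord leB) (\<lambda>f. \<forall>x. maximal_on UNIV leA x \<longrightarrow> leB (f x) (u x))"
      proof (rule ccpo.admissibleI, intro allI impI)
        fix A x assume c: "Complete_Partial_Order.chain (fun_ord leB) A" and ne: "A \<noteq> {}"
          and all: "\<forall>f\<in>A. \<forall>x. maximal_on UNIV leA x \<longrightarrow> leB (f x) (u x)" and xm: "maximal_on UNIV leA x"
        have cx: "Complete_Partial_Order.chain leB {z. \<exists>f\<in>A. z = f x}" by (rule chain_fun[OF c])
        show "leB (fun_lub Lb A x) (u x)" unfolding fun_lub_def
          by (rule partial_function_definitions.lub_least[OF pB cx]) (use all xm in blast)
      qed
    next
      show "\<forall>x. maximal_on UNIV leA x \<longrightarrow> leB (fun_lub Lb {} x) (u x)"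
        using partial_function_definitions.lub_least[OF pB chain_empty]
        by (simp add: fun_lub_def)
    next
      fix f assume IH: "\<forall>x. maximal_on UNIV leA x \<longrightarrow> leB (f x) (u x)"
      show "\<forall>x. maximal_on UNIV leA x \<longrightarrow> leB (F f x) (u x)"
      proof (intro allI impI)
        fix x assume xm: "maximal_on UNIV leA x"
        have "leB (F f x) (h (x, map (\<lambda>i. u (g i x)) [0..<m]))"
          unfolding F_def by (rule h_mono) (auto intro: reflA IH[rule_format] g_max xm)
        then show "leB (F f x) (u x)" using hu xm by metis
      qed
    qed
    have "leB (fs x) (u x)" using P mx by blast
    then show "u x = fs x" using fsmax mx unfolding maximal_on_def by blast
  qed
  have reg: "regular_on UNIV leA UNIV leB fs"
    unfolding regular_on_def using fsmono fsmax by blast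
  show ?thesis
    apply (rule exI[of _ fs])
    using fixeq least reg fsmax uniq unfolding F_def Let_def by blast
qed

end
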